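(* Let $p>0$ and let $u:\mathbb{R}^4\to\mathbb{R}$ be a solution to $\Delta^2 u=(1-|x|^p)e^{4u}$ in $\mathbb{R}^4$ with $(1-|x|^p)e^{4u}\in L^1(\mathbb{R}^4)$, $\Lambda:=\int_{\mathbb{R}^4}(1-|x|^p)e^{4u}dx$, and $$v(x):=\frac{1}{8\pi^2}\int_{\mathbb{R}^4}\log\left(\frac{|y|}{|x-y|}\right)(1-|y|^p)e^{4u(y)}\,dy.$$ Then for every $\varepsilon>0$ there exists $R=R(\varepsilon)>0$ such that for all $|x|\ge R$, $$v(x)\ge -\frac{1}{8\pi^2}(\Lambda+5\varepsilon)\log|x|-\frac{1}{8\pi^2}\int_{B_1(x)}\log(|x-y|)(1-|y|^p)e^{4u(y)}\,dy.$$
   Context: $B_1(x)$ denotes the open ball of radius $1$ centered at $x$ in $\mathbb{R}^4$. *)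

theory Defs
  imports "HOL-Analysis.Analysis"
begin

definition partial :: "'a::euclidean_space \<Rightarrow> ('a \<Rightarrow> real) \<Rightarrow> 'a \<Rightarrow> real" where
  "partial b f x = deriv (\<lambda>t. f (x + t *\<^sub>R b)) 0"

fun Ck :: "nat \<Rightarrow> ('a::euclidean_space \<Rightarrow> real) \<Rightarrow> bool" where
  "Ck 0 f = continuous_on UNIV f"
| "Ck (Suc k) f = (continuous_on UNIV f \<and>
      (\<forall>b\<in>Basis. \<forall>x. (\<lambda>t. f (x + t *\<^sub>R b)) differentiable (at 0)) \<and>
      (\<forall>b\<in>Basis. Ck k (partial b f)))"

definition laplacian :: "('a::euclidean_space \<Rightarrow> real) \<Rightarrow> 'a \<Rightarrow> real" where
  "laplacian f x = (\<Sum>b\<in>Basis. partial b (partial b f) x)"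

definition bilaplacian :: "('a::euclidean_space \<Rightarrow> real) \<Rightarrow> 'a \<Rightarrow> real" where
  "bilaplacian f = laplacian (laplacian f)"

end

theory Submission
  imports Defs
begin
thm Bochner_Integration.integrable_bound

lemma meas_ln_norm_diff: "(\<lambda>x::'a::euclidean_space. ln (norm (x - c))) \<in> borel_measurable lborel"
  by (intro borel_measurable_ln) simp

lemma key_pointwise:
  fixes y c :: "'a::euclidean_space"
  shows "ennreal (norm (indicator (cball c 1) y * ln (norm (y - c))))
     \<le> ennreal (ln 2) * (\<Sum>k. indicator (cball c (1/2^k)) y)"
proof (cases "y \<in> cball c 1 \<and> y \<noteq> c")
  case False
  then show ?thesis by (auto simp: indicator_def)
next
  case True
  define r where "r = norm (y - c)"
  have r: "0 < r" "r \<le> 1" using True by (auto simp: r_def dist_norm norm_minus_commute)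
  define m where "m = nat (floor (- ln r / ln 2))"
  have "ln r \<le> 0" using r by simp
  hence l0: "0 \<le> - ln r / ln 2" by (simp add: divide_nonpos_pos)
  have m1: "real m \<le> - ln r / ln 2" using l0 unfolding m_def by linarith
  have m2: "- ln r / ln 2 < real m + 1" using l0 unfolding m_def by linarith
  have ln2: "ln 2 > (0::real)" by simp
  have "ln r \<le> - real m * ln 2" using m1 ln2 by (simp add: field_simps)
  hence "r \<le> exp (- real m * ln 2)" using r by (metis exp_ln exp_le_cancel_iff)
  also have "exp (- real m * ln 2) = 1 / 2^m"
    by (simp add: exp_minus exp_of_nat_mult inverse_eq_divide mult.commute)
  finally have rm: "r \<le> 1 / 2^m" .
  have lnr: "- ln r \<le> (real m + 1) * ln 2" using m2 ln2 by (simp add: field_simps)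
  have "(\<Sum>k<m+1. indicator (cball c (1/2^k)) y :: ennreal) = (\<Sum>k<m+1. 1)"
  proof (rule sum.cong)
    fix k assume "k \<in> {..<m+1}"
    hence "(1::real)/2^m \<le> 1/2^k" by (simp add: field_simps)
    with rm show "indicator (cball c (1/2^k)) y = (1::ennreal)"
      by (simp add: indicator_def r_def dist_norm norm_minus_commute)
  qed simp
  also have "\<dots> = ennreal (real m + 1)" by (simp add: ennreal_of_nat_eq_real_of_nat)
  finally have s: "ennreal (real m + 1) \<le> (\<Sum>k. indicator (cball c (1/2^k)) y)"
    by (metis sum_le_suminf summableI finite_lessThan zero_le)
  have "ennreal (norm (indicator (cball c 1) y * ln (norm (y - c)))) = ennreal (- ln r)"
    using True r by (simp add: r_def)
  also have "\<dots> \<le> ennreal ((real m + 1) * ln 2)" using lnr by (rule ennreal_leI)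
  also have "\<dots> = ennreal (ln 2) * ennreal (real m + 1)"
    by (simp add: ennreal_mult' mult.commute)
  also have "\<dots> \<le> ennreal (ln 2) * (\<Sum>k. indicator (cball c (1/2^k)) y)"
    using s by (rule mult_left_mono) simp
  finally show ?thesis .
qed

lemma key_integrable:
  fixes c :: "'a::euclidean_space"
  shows "integrable lborel (\<lambda>y. indicator (cball c 1) y * ln (norm (y - c)))"
proof (rule integrableI_bounded)
  show "(\<lambda>y. indicator (cball c 1) y * ln (norm (y - c))) \<in> borel_measurable lborel"
    using meas_ln_norm_diff[of c] by (intro borel_measurable_times borel_measurable_indicator) auto
  define V where "V = unit_ball_vol (real DIM('a))"
  have V: "V \<ge> 0" unfolding V_def by (simp add: unit_ball_vol_def)
  have d: "DIM('a) \<ge> 1" by (simp add: DIM_positive Suc_leI)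
  have e: "\<And>k::nat. emeasure lborel (cball c (1/2^k)) = ennreal (V * (1/2^DIM('a))^k)"
    by (subst emeasure_cball) (simp_all add: V_def power_divide power_mult[symmetric] mult.commute flip: power_mult)
  have sm: "summable (\<lambda>k::nat. V * (1/2^DIM('a))^k)"
    using d by (intro summable_mult summable_geometric) simp
  have "(\<integral>\<^sup>+ y. ennreal (norm (indicator (cball c 1) y * ln (norm (y - c)))) \<partial>lborel)
      \<le> (\<integral>\<^sup>+ y. ennreal (ln 2) * (\<Sum>k. indicator (cball c (1/2^k)) y) \<partial>lborel)"
    by (intro nn_integral_mono key_pointwise)
  also have "\<dots> = (\<integral>\<^sup>+ y. (\<Sum>k. ennreal (ln 2) * indicator (cball c (1/2^k)) y) \<partial>lborel)"
    by (simp add: ennreal_suminf_cmult)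
  also have "\<dots> = (\<Sum>k. ennreal (ln 2) * emeasure lborel (cball c (1/2^k)))"
    by (subst nn_integral_suminf) (auto simp: nn_integral_cmult_indicator intro!: borel_measurable_times_ennreal borel_measurable_indicator)
  also have "\<dots> = ennreal (ln 2) * (\<Sum>k. emeasure lborel (cball c (1/2^k)))"
    by (simp add: ennreal_suminf_cmult)
  also have "\<dots> = ennreal (ln 2) * ennreal (\<Sum>k. V * (1/2^DIM('a))^k)"
    using sm V by (simp add: e suminf_ennreal2)
  also have "\<dots> < \<infinity>" by (simp add: ennreal_mult_less_top)
  finally show "(\<integral>\<^sup>+ y. ennreal (norm (indicator (cball c 1) y * ln (norm (y - c)))) \<partial>lborel) < \<infinity>" .
qed


lemma ln_upper:
  fixes a b X :: real
  assumes "a > 0" "b > 0" "X \<ge> 0" "a \<le> X + b"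
  shows "ln a - ln b \<le> ln (1 + X) + (if b \<le> 1 then - ln b else 0)"
proof (cases "b \<le> 1")
  case True
  have "ln a \<le> ln (1 + X)" using assms True by (subst ln_le_cancel_iff) auto
  then show ?thesis using True by simp
next
  case False
  have "1 * X \<le> b * X" using assms False by (intro mult_right_mono) auto
  hence "a \<le> b * (1 + X)" using assms by (simp add: distrib_left)
  hence "ln a \<le> ln (b * (1 + X))" using assms by (subst ln_le_cancel_iff) auto
  also have "\<dots> = ln b + ln (1 + X)" using assms by (simp add: ln_mult)
  finally show ?thesis using False by simp
qed

lemma ln_abs_diff:
  fixes a b X :: real
  assumes "a > 0" "b > 0" "X \<ge> 0" "a \<le> X + b" "b \<le> X + a"
  shows "\<bar>ln a - ln b\<bar> \<le> ln (1 + X) + (if a \<le> 1 then - ln a else 0) + (if b \<le> 1 then - ln b else 0)"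
proof -
  have 1: "ln a - ln b \<le> ln (1 + X) + (if b \<le> 1 then - ln b else 0)" using ln_upper assms by blast
  have 2: "ln b - ln a \<le> ln (1 + X) + (if a \<le> 1 then - ln a else 0)" using ln_upper assms by blast
  have 3: "(if a \<le> 1 then - ln a else 0) \<ge> 0" "(if b \<le> 1 then - ln b else 0) \<ge> 0" using assms by auto
  show ?thesis using 1 2 3 by linarith
qed

lemma loc_integrable:
  fixes f :: "'a::euclidean_space \<Rightarrow> real"
  assumes fm: "f \<in> borel_measurable lborel"
    and M: "\<And>y. y \<in> cball c 1 \<Longrightarrow> \<bar>f y\<bar> \<le> M"
  shows "integrable lborel (\<lambda>y. indicator (cball c 1) y * (ln (norm (y - c)) * f y))"
proof (rule Bochner_Integration.integrable_bound)
  show "integrable lborel (\<lambda>y. M * (indicator (cball c 1) y * ln (norm (y - c))))"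
    using key_integrable[of c] by simp
  show "(\<lambda>y. indicator (cball c 1) y * (ln (norm (y - c)) * f y)) \<in> borel_measurable lborel"
    using meas_ln_norm_diff[of c] fm by (intro borel_measurable_times borel_measurable_indicator) auto
  show "AE y in lborel. norm (indicator (cball c 1) y * (ln (norm (y - c)) * f y))
      \<le> norm (M * (indicator (cball c 1) y * ln (norm (y - c))))"
  proof (intro AE_I2)
    fix y
    show "norm (indicator (cball c 1) y * (ln (norm (y - c)) * f y))
      \<le> norm (M * (indicator (cball c 1) y * ln (norm (y - c))))"
    proof (cases "y \<in> cball c 1")
      case True
      have "\<bar>ln (norm (y - c))\<bar> * \<bar>f y\<bar> \<le> \<bar>ln (norm (y - c))\<bar> * \<bar>M\<bar>"
        using M[OF True] by (intro mult_left_mono) auto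
      then show ?thesis using True by (simp add: abs_mult mult.commute)
    qed simp
  qed
qed



lemma glob_integrable:
  fixes f :: "'a::euclidean_space \<Rightarrow> real"
  assumes fi: "integrable lborel f"
    and M0: "\<And>y. y \<in> cball 0 1 \<Longrightarrow> \<bar>f y\<bar> \<le> M0"
    and Mx: "\<And>y. y \<in> cball x 1 \<Longrightarrow> \<bar>f y\<bar> \<le> Mx"
  shows "integrable lborel (\<lambda>y. ln (norm y / norm (x - y)) * f y)"
proof (rule Bochner_Integration.integrable_bound)
  have fm: "f \<in> borel_measurable lborel" using fi by auto
  have M0p: "M0 \<ge> 0" using M0[of 0] by simp
  have Mxp: "Mx \<ge> 0" using Mx[of x] by simp
  define w where "w y = ln (1 + norm x) * \<bar>f y\<bar> + M0 * \<bar>indicator (cball 0 1) y * ln (norm (y - 0))\<bar>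
      + Mx * \<bar>indicator (cball x 1) y * ln (norm (y - x))\<bar>" for y
  show "integrable lborel w" unfolding w_def
    using key_integrable[of 0] key_integrable[of x] fi
    by (intro Bochner_Integration.integrable_add integrable_mult_right integrable_abs key_integrable fi)
  show "(\<lambda>y. ln (norm y / norm (x - y)) * f y) \<in> borel_measurable lborel"
    using fm by measurable
  show "AE y in lborel. norm (ln (norm y / norm (x - y)) * f y) \<le> norm (w y)"
  proof (intro AE_I2)
    fix y
    have wnn: "w y \<ge> 0" unfolding w_def using M0p Mxp by (intro add_nonneg_nonneg mult_nonneg_nonneg) auto
    show "norm (ln (norm y / norm (x - y)) * f y) \<le> norm (w y)"
    proof (cases "y = 0 \<or> y = x")
      case True
      then show ?thesis using wnn by auto
    next
      case False
      define a where "a = norm y"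
      define b where "b = norm (x - y)"
      have ab: "a > 0" "b > 0" using False by (auto simp: a_def b_def)
      have t1: "a \<le> norm x + b" unfolding a_def b_def
        using norm_triangle_ineq2[of y x] norm_minus_commute[of y x] by linarith
      have t2: "b \<le> norm x + a" unfolding a_def b_def
        using norm_triangle_ineq4[of x y] by linarith
      have L: "\<bar>ln a - ln b\<bar> \<le> ln (1 + norm x) + (if a \<le> 1 then - ln a else 0) + (if b \<le> 1 then - ln b else 0)"
        using ln_abs_diff[OF ab _ t1 t2] by simp
      have A: "(if a \<le> 1 then - ln a else 0) * \<bar>f y\<bar> \<le> M0 * \<bar>indicator (cball 0 1) y * ln (norm (y - 0))\<bar>"
      proof (cases "a \<le> 1")
        case True
        hence "y \<in> cball 0 1" by (simp add: a_def)
        moreover have "- ln a \<ge> 0" using True ab by simp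
        moreover have "\<bar>indicator (cball 0 1) y * ln (norm (y - 0))\<bar> = - ln a"
          using True ab by (simp add: a_def \<open>y \<in> cball 0 1\<close>)
        ultimately have "(- ln a) * \<bar>f y\<bar> \<le> (- ln a) * M0" using M0 by (intro mult_left_mono) auto
        then show ?thesis using True \<open>\<bar>indicator (cball 0 1) y * ln (norm (y - 0))\<bar> = - ln a\<close>
          by (simp add: mult.commute)
      qed (use M0p in simp)
      have B: "(if b \<le> 1 then - ln b else 0) * \<bar>f y\<bar> \<le> Mx * \<bar>indicator (cball x 1) y * ln (norm (y - x))\<bar>"
      proof (cases "b \<le> 1")
        case True
        hence "y \<in> cball x 1" by (simp add: b_def dist_norm)
        moreover have "- ln b \<ge> 0" using True ab by simp
        moreover have "norm (y - x) = b" by (simp add: b_def norm_minus_commute)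
        ultimately have e: "\<bar>indicator (cball x 1) y * ln (norm (y - x))\<bar> = - ln b"
          using True ab by simp
        have "(- ln b) * \<bar>f y\<bar> \<le> (- ln b) * Mx" using Mx \<open>y \<in> cball x 1\<close> \<open>- ln b \<ge> 0\<close>
          by (intro mult_left_mono) auto
        then show ?thesis using True e by (simp add: mult.commute)
      qed (use Mxp in simp)
      have "norm (ln (norm y / norm (x - y)) * f y) = \<bar>ln a - ln b\<bar> * \<bar>f y\<bar>"
      proof -
        have "ln (norm y / norm (x - y)) = ln a - ln b" using ab unfolding a_def b_def by (rule ln_divide_pos)
        then show ?thesis by (simp only: norm_mult real_norm_def abs_mult)
      qed
      also have "\<dots> \<le> (ln (1 + norm x) + (if a \<le> 1 then - ln a else 0) + (if b \<le> 1 then - ln b else 0)) * \<bar>f y\<bar>"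
        using L by (rule mult_right_mono) simp
      also have "\<dots> = ln (1 + norm x) * \<bar>f y\<bar> + (if a \<le> 1 then - ln a else 0) * \<bar>f y\<bar> + (if b \<le> 1 then - ln b else 0) * \<bar>f y\<bar>"
        by (simp only: distrib_right)
      also have "\<dots> \<le> w y" unfolding w_def using A B by linarith
      finally show ?thesis using wnn by simp
    qed
  qed
qed



lemma int_ind:
  fixes F :: "'a::euclidean_space \<Rightarrow> real"
  assumes "A \<in> sets borel" "integrable lborel F"
  shows "integrable lborel (\<lambda>y. indicator A y * F y)"
  using integrable_mult_indicator[of A lborel F] assms by simp

lemma tail:
  fixes f :: "'a::euclidean_space \<Rightarrow> real"
  assumes fi: "integrable lborel f" and e: "e > 0"
  shows "\<exists>R0\<ge>1. (\<integral>y. indicator (- cball 0 R0) y * \<bar>f y\<bar> \<partial>lborel) \<le> e"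
proof -
  have fm: "f \<in> borel_measurable lborel" using fi by auto
  have cb: "\<And>r. - cball (0::'a) r \<in> sets borel" by (intro borel_open) auto
  have lim: "(\<lambda>n. \<integral>y. indicator (- cball 0 (real n)) y * \<bar>f y\<bar> \<partial>lborel) \<longlonglongrightarrow> (\<integral>y. 0 \<partial>(lborel::'a measure))"
  proof (rule integral_dominated_convergence[where w = "\<lambda>y. \<bar>f y\<bar>" and f = "\<lambda>y. 0"
      and s = "\<lambda>n y. indicator (- cball 0 (real n)) y * \<bar>f y\<bar>" and M = lborel])
    show "(\<lambda>y. 0::real) \<in> borel_measurable lborel" by simp
    show "\<And>n. (\<lambda>y. indicator (- cball 0 (real n)) y * \<bar>f y\<bar>) \<in> borel_measurable lborel"
      using fm cb by (intro borel_measurable_times borel_measurable_indicator borel_measurable_abs) auto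
    show "integrable lborel (\<lambda>y. \<bar>f y\<bar>)" using fi by (rule integrable_abs)
    show "AE y in lborel. (\<lambda>n. indicator (- cball 0 (real n)) y * \<bar>f y\<bar>) \<longlonglongrightarrow> 0"
    proof (intro AE_I2 tendsto_eventually)
      fix y :: 'a
      obtain N :: nat where N: "norm y \<le> real N" using real_arch_simple by blast
      show "\<forall>\<^sub>F n in sequentially. indicator (- cball 0 (real n)) y * \<bar>f y\<bar> = 0"
        using N by (intro eventually_sequentiallyI[of N]) (auto simp: indicator_def)
    qed
    show "\<And>n. AE y in lborel. norm (indicator (- cball 0 (real n)) y * \<bar>f y\<bar>) \<le> \<bar>f y\<bar>"
      by (intro AE_I2) (auto simp: indicator_def)
  qed
  then obtain N where N: "\<And>n. n \<ge> N \<Longrightarrow> dist (\<integral>y. indicator (- cball 0 (real n)) y * \<bar>f y\<bar> \<partial>lborel) 0 < e"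
    using e by (auto simp: LIMSEQ_def)
  show ?thesis
    using N[of "max N 1"] by (intro exI[of _ "real (max N 1)"]) (auto simp: dist_norm)
qed



lemma J_integrable:
  fixes f :: "'a::euclidean_space \<Rightarrow> real"
  assumes fi: "integrable lborel f" and R0: "R0 \<ge> 1"
    and M: "\<And>y. y \<in> cball 0 R0 \<Longrightarrow> \<bar>f y\<bar> \<le> M"
  shows "integrable lborel (\<lambda>y. indicator (cball 0 R0) y * (ln (norm y) * f y))"
proof (rule Bochner_Integration.integrable_bound)
  have fm: "f \<in> borel_measurable lborel" using fi by auto
  have Mp: "M \<ge> 0" using M[of 0] R0 by simp
  have lR: "ln R0 \<ge> 0" using R0 by simp
  define w where "w y = M * \<bar>indicator (cball 0 1) y * ln (norm (y - 0))\<bar> + ln R0 * \<bar>f y\<bar>" for y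
  show "integrable lborel w" unfolding w_def
    using key_integrable[of 0] fi
    by (intro Bochner_Integration.integrable_add integrable_mult_right integrable_abs key_integrable fi)
  show "(\<lambda>y. indicator (cball 0 R0) y * (ln (norm y) * f y)) \<in> borel_measurable lborel"
    using fm by (intro borel_measurable_times borel_measurable_indicator borel_measurable_ln) (auto intro: borel_closed)
  show "AE y in lborel. norm (indicator (cball 0 R0) y * (ln (norm y) * f y)) \<le> norm (w y)"
  proof (intro AE_I2)
    fix y :: 'a
    have wnn: "w y \<ge> 0" unfolding w_def using Mp lR by (intro add_nonneg_nonneg mult_nonneg_nonneg) auto
    show "norm (indicator (cball 0 R0) y * (ln (norm y) * f y)) \<le> norm (w y)"
    proof (cases "y \<in> cball 0 R0 \<and> y \<noteq> 0")
      case False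
      then show ?thesis using wnn by (auto simp: indicator_def)
    next
      case True
      have fy: "\<bar>f y\<bar> \<le> M" using M True by blast
      have ny: "norm y > 0" "norm y \<le> R0" using True by auto
      show ?thesis
      proof (cases "norm y \<le> 1")
        case True
        have e: "\<bar>indicator (cball 0 1) y * ln (norm (y - 0))\<bar> = \<bar>ln (norm y)\<bar>" using True by simp
        have "\<bar>ln (norm y)\<bar> * \<bar>f y\<bar> \<le> \<bar>ln (norm y)\<bar> * M" using fy by (intro mult_left_mono) auto
        moreover have "ln R0 * \<bar>f y\<bar> \<ge> 0" using lR by simp
        ultimately show ?thesis using ny wnn unfolding w_def e by (simp add: abs_mult mult.commute)
      next
        case False
        have "\<bar>ln (norm y)\<bar> \<le> ln R0" using False ny by simp
        hence "\<bar>ln (norm y)\<bar> * \<bar>f y\<bar> \<le> ln R0 * \<bar>f y\<bar>" by (intro mult_right_mono) auto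
        moreover have "M * \<bar>indicator (cball 0 1) y * ln (norm (y - 0))\<bar> \<ge> 0" using Mp by simp
        ultimately show ?thesis using ny wnn unfolding w_def by (simp add: abs_mult)
      qed
    qed
  qed
qed



lemma pointwise:
  fixes f :: "'a::euclidean_space \<Rightarrow> real" and x y :: 'a
  assumes R0: "R0 \<ge> 1" and nx: "norm x \<ge> 2 * R0 + 1" and y0: "y \<noteq> 0" and yx: "y \<noteq> x"
    and sgn: "\<And>y. norm y \<ge> 1 \<Longrightarrow> f y \<le> 0"
  shows "indicator (cball 0 R0) y * (ln (norm y) * f y) - ln (norm x + R0) * (indicator (cball 0 R0) y * f y)
      - ln 3 * \<bar>f y\<bar> + ln (1 + norm x) * (indicator (- cball 0 R0) y * f y)
   \<le> ln (norm y / norm (x - y)) * f y + indicator (ball x 1) y * (ln (norm (x - y)) * f y)"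
proof -
  define a where "a = norm y"
  define b where "b = norm (x - y)"
  have ab: "a > 0" "b > 0" using y0 yx by (auto simp: a_def b_def)
  have t1: "a \<le> norm x + b" unfolding a_def b_def
    using norm_triangle_ineq2[of y x] norm_minus_commute[of y x] by linarith
  have t2: "b \<le> norm x + a" unfolding a_def b_def
    using norm_triangle_ineq4[of x y] by linarith
  have t3: "norm x - a \<le> b" unfolding a_def b_def
    using norm_triangle_ineq2[of x y] by linarith
  have lnd: "ln (norm y / norm (x - y)) = ln a - ln b" using ab unfolding a_def b_def by (rule ln_divide_pos)
  have l3: "ln 3 * \<bar>f y\<bar> \<ge> 0" by simp
  show ?thesis
  proof (cases "a \<le> R0")
    case True
    have yin: "y \<in> cball 0 R0" using True by (simp add: a_def)
    have "b \<ge> norm x - R0" using t3 True by linarith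
    hence "b > 1" using nx R0 by linarith
    hence ynb: "y \<notin> ball x 1" by (simp add: b_def dist_norm)
    have bpos: "norm x - R0 > 0" using nx R0 by linarith
    have bu: "b \<le> norm x + R0" using t2 True by linarith
    have bl: "norm x + R0 \<le> 3 * b" using \<open>b \<ge> norm x - R0\<close> nx R0 by linarith
    have key: "- ln b * f y \<ge> - ln (norm x + R0) * f y - ln 3 * \<bar>f y\<bar>"
    proof (cases "f y \<ge> 0")
      case True
      have "ln b \<le> ln (norm x + R0)" using bu ab by simp
      hence "ln b * f y \<le> ln (norm x + R0) * f y" using True by (rule mult_right_mono)
      then show ?thesis using l3 by linarith
    next
      case False
      have "ln (norm x + R0) \<le> ln (3 * b)" using bl bpos ab R0 by (subst ln_le_cancel_iff) auto
      also have "\<dots> = ln 3 + ln b" using ab by (simp add: ln_mult)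
      finally have "ln (norm x + R0) - ln 3 \<le> ln b" by linarith
      hence "ln b * f y \<le> (ln (norm x + R0) - ln 3) * f y" using False by (intro mult_right_mono_neg) auto
      moreover have "\<bar>f y\<bar> = - f y" using False by simp
      ultimately show ?thesis by (simp add: algebra_simps)
    qed
    show ?thesis using yin ynb key unfolding lnd by (simp add: algebra_simps a_def)
  next
    case False
    have yout: "y \<notin> cball 0 R0" using False by (simp add: a_def)
    have fneg: "f y \<le> 0" using sgn[of y] False R0 by (simp add: a_def)
    have nx0: "norm x \<ge> 0" by simp
    show ?thesis
    proof (cases "b < 1")
      case True
      have yb: "y \<in> ball x 1" using True by (simp add: b_def dist_norm)
      have "ln a \<le> ln (1 + norm x)" using t1 True ab by simp
      hence "ln (1 + norm x) * f y \<le> ln a * f y" using fneg by (rule mult_right_mono_neg)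
      have l3': "0 \<le> \<bar>f y\<bar> * ln 3" by simp
      show ?thesis using \<open>ln (1 + norm x) * f y \<le> ln a * f y\<close> yout yb unfolding lnd
        by (simp add: algebra_simps a_def b_def) (use l3' in linarith)
    next
      case False
      have ynb: "y \<notin> ball x 1" using False by (simp add: b_def dist_norm)
      have "1 * norm x \<le> b * norm x" using False by (intro mult_right_mono) auto
      hence "a \<le> b * (1 + norm x)" using t1 by (simp add: distrib_left)
      hence "ln a \<le> ln (b * (1 + norm x))" using ab by (subst ln_le_cancel_iff) auto
      also have "\<dots> = ln b + ln (1 + norm x)" using ab by (intro ln_mult_pos) (simp_all add: add_pos_nonneg)
      finally have "ln a - ln b \<le> ln (1 + norm x)" by linarith
      hence "ln (1 + norm x) * f y \<le> (ln a - ln b) * f y" using fneg by (rule mult_right_mono_neg)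
      have l3': "0 \<le> \<bar>f y\<bar> * ln 3" by simp
      show ?thesis using \<open>ln (1 + norm x) * f y \<le> (ln a - ln b) * f y\<close> yout ynb unfolding lnd
        by (simp add: algebra_simps) (use l3' in linarith)
    qed
  qed
qed



lemma arith_final:
  fixes P l Iin Iout \<Lambda> e J A K Qx t2 t3 :: real
  assumes "\<Lambda> = Iin + Iout"
    and e1: "(P - l) * Iin \<le> t2 * \<bar>Iin\<bar>"
    and e2: "l * Iout \<ge> - (l * e)"
    and e3: "Qx * Iout \<ge> - ((l + t2) * e)"
    and K: "K = \<bar>J\<bar> + t3 * A + t2 * \<bar>Iin\<bar> + t2 * e"
    and lK: "3 * e * l \<ge> K"
  shows "- (\<Lambda> + 5 * e) * l \<le> J - P * Iin - t3 * A + Qx * Iout"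
proof -
  have h1: "P * Iin = l * Iin + (P - l) * Iin" by (simp add: algebra_simps)
  have h2: "l * Iin = l * \<Lambda> - l * Iout" using assms(1) by (simp add: algebra_simps)
  have h3: "- (\<Lambda> + 5 * e) * l = - (l * \<Lambda>) - 5 * (e * l)" by (simp add: algebra_simps)
  have h4: "(l + t2) * e = e * l + t2 * e" by (simp add: algebra_simps)
  have h5: "3 * e * l = 3 * (e * l)" by simp
  have h6: "l * e = e * l" by simp
  have h7: "- J \<le> \<bar>J\<bar>" by simp
  show ?thesis using h1 h2 h3 h4 h5 h6 h7 e1 e2 e3 K lK by linarith
qed

lemma main_bound:
  fixes f :: "'a::euclidean_space \<Rightarrow> real"
  assumes fi: "integrable lborel f"
    and bnd: "\<And>c r. \<exists>M. \<forall>y\<in>cball c r. \<bar>f y\<bar> \<le> M"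
    and sgn: "\<And>y. norm y \<ge> 1 \<Longrightarrow> f y \<le> 0"
    and eps: "\<epsilon> > 0"
  shows "\<exists>R>0. \<forall>x. norm x \<ge> R \<longrightarrow>
     (\<integral>y. ln (norm y / norm (x - y)) * f y \<partial>lborel)
       + (\<integral>y\<in>ball x 1. ln (norm (x - y)) * f y \<partial>lborel)
     \<ge> - ((\<integral>y. f y \<partial>lborel) + 5 * \<epsilon>) * ln (norm x)"
proof -
  have fm: "f \<in> borel_measurable lborel" using fi by auto
  obtain R0 where R0: "R0 \<ge> 1" and T: "(\<integral>y. indicator (- cball 0 R0) y * \<bar>f y\<bar> \<partial>lborel) \<le> \<epsilon>"
    using tail[OF fi eps] by blast
  obtain MR where MR: "\<And>y. y \<in> cball 0 R0 \<Longrightarrow> \<bar>f y\<bar> \<le> MR" using bnd[of 0 R0] by blast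
  have cbin: "cball (0::'a) R0 \<in> sets borel" by (intro borel_closed) auto
  have cbout: "- cball (0::'a) R0 \<in> sets borel" by (intro borel_open) auto
  have fa: "integrable lborel (\<lambda>y. \<bar>f y\<bar>)" using fi by (rule integrable_abs)
  have i_in: "integrable lborel (\<lambda>y. indicator (cball 0 R0) y * f y)" using int_ind[OF cbin fi] .
  have i_out: "integrable lborel (\<lambda>y. indicator (- cball 0 R0) y * f y)" using int_ind[OF cbout fi] .
  have i_outa: "integrable lborel (\<lambda>y. indicator (- cball 0 R0) y * \<bar>f y\<bar>)" using int_ind[OF cbout fa] .
  have i_J: "integrable lborel (\<lambda>y. indicator (cball 0 R0) y * (ln (norm y) * f y))"
    using J_integrable[OF fi R0 MR] .
  define Iin where "Iin = (\<integral>y. indicator (cball 0 R0) y * f y \<partial>lborel)"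
  define Iout where "Iout = (\<integral>y. indicator (- cball 0 R0) y * f y \<partial>lborel)"
  define J where "J = (\<integral>y. indicator (cball 0 R0) y * (ln (norm y) * f y) \<partial>lborel)"
  define A where "A = (\<integral>y. \<bar>f y\<bar> \<partial>lborel)"
  define \<Lambda> where "\<Lambda> = (\<integral>y. f y \<partial>lborel)"
  have split: "\<Lambda> = Iin + Iout"
  proof -
    have "\<Lambda> = (\<integral>y. indicator (cball 0 R0) y * f y + indicator (- cball 0 R0) y * f y \<partial>lborel)"
      unfolding \<Lambda>_def by (intro Bochner_Integration.integral_cong) (auto simp: indicator_def)
    also have "\<dots> = Iin + Iout" unfolding Iin_def Iout_def using i_in i_out by (rule Bochner_Integration.integral_add)
    finally show ?thesis .
  qed
  have Iout_b: "\<bar>Iout\<bar> \<le> \<epsilon>"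
  proof -
    have "\<bar>Iout\<bar> \<le> (\<integral>y. norm (indicator (- cball 0 R0) y * f y) \<partial>lborel)"
      unfolding Iout_def using integral_norm_bound[of lborel "\<lambda>y. indicator (- cball 0 R0) y * f y"] by simp
    also have "\<dots> = (\<integral>y. indicator (- cball 0 R0) y * \<bar>f y\<bar> \<partial>lborel)"
      by (intro Bochner_Integration.integral_cong) (auto simp: indicator_def)
    finally show ?thesis using T by linarith
  qed
  have A0: "A \<ge> 0" unfolding A_def by simp
  define K where "K = \<bar>J\<bar> + ln 3 * A + ln 2 * \<bar>Iin\<bar> + ln 2 * \<epsilon>"
  define R where "R = max (2 * R0 + 1) (exp (K / (3 * \<epsilon>)))"
  have Rpos: "R > 0" unfolding R_def using R0 by simp
  show ?thesis
  proof (intro exI[of _ R] conjI allI impI Rpos)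
    fix x :: 'a
    assume xR: "norm x \<ge> R"
    have nx: "norm x \<ge> 2 * R0 + 1" using xR unfolding R_def by simp
    have nxK: "norm x \<ge> exp (K / (3 * \<epsilon>))" using xR unfolding R_def by simp
    have nx1: "norm x \<ge> 1" using nx R0 by simp
    define l where "l = ln (norm x)"
    have l0: "l \<ge> 0" unfolding l_def using nx1 by simp
    have lK: "l \<ge> K / (3 * \<epsilon>)" unfolding l_def using nxK
      by (metis exp_gt_zero exp_le_cancel_iff exp_ln less_le_trans)
    hence lK': "3 * \<epsilon> * l \<ge> K" using eps by (simp add: field_simps)
    obtain M0 where M0: "\<And>y. y \<in> cball 0 1 \<Longrightarrow> \<bar>f y\<bar> \<le> M0" using bnd[of 0 1] by blast
    obtain Mx where Mx: "\<And>y. y \<in> cball x 1 \<Longrightarrow> \<bar>f y\<bar> \<le> Mx" using bnd[of x 1] by blast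
    have ig: "integrable lborel (\<lambda>y. ln (norm y / norm (x - y)) * f y)"
      using glob_integrable[OF fi M0 Mx] .
    have ih: "integrable lborel (\<lambda>y. indicator (ball x 1) y * (ln (norm (x - y)) * f y))"
    proof -
      have "integrable lborel (\<lambda>y. indicator (ball x 1) y * (indicator (cball x 1) y * (ln (norm (y - x)) * f y)))"
        by (intro int_ind loc_integrable[OF fm Mx]) auto
      moreover have "\<And>y. indicator (ball x 1) y * (indicator (cball x 1) y * (ln (norm (y - x)) * f y))
          = indicator (ball x 1) y * (ln (norm (x - y)) * f y)"
        by (auto simp: indicator_def norm_minus_commute)
      ultimately show ?thesis by simp
    qed
    have Bdef: "(\<integral>y\<in>ball x 1. ln (norm (x - y)) * f y \<partial>lborel)
        = (\<integral>y. indicator (ball x 1) y * (ln (norm (x - y)) * f y) \<partial>lborel)"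
      by (simp add: set_lebesgue_integral_def)
    define \<phi> where "\<phi> y = indicator (cball 0 R0) y * (ln (norm y) * f y) - ln (norm x + R0) * (indicator (cball 0 R0) y * f y)
      - ln 3 * \<bar>f y\<bar> + ln (1 + norm x) * (indicator (- cball 0 R0) y * f y)" for y
    have iphi: "integrable lborel \<phi>" unfolding \<phi>_def
      by (intro Bochner_Integration.integrable_add Bochner_Integration.integrable_diff integrable_mult_right i_J i_in fa i_out)
    have intphi: "(\<integral>y. \<phi> y \<partial>lborel) = J - ln (norm x + R0) * Iin - ln 3 * A + ln (1 + norm x) * Iout"
      unfolding \<phi>_def J_def Iin_def A_def Iout_def
      by (subst Bochner_Integration.integral_add Bochner_Integration.integral_diff Bochner_Integration.integral_mult_right;
          (intro Bochner_Integration.integrable_add Bochner_Integration.integrable_diff integrable_mult_right i_J i_in fa i_out)?)+ simp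
    have mono: "(\<integral>y. \<phi> y \<partial>lborel) \<le> (\<integral>y. ln (norm y / norm (x - y)) * f y + indicator (ball x 1) y * (ln (norm (x - y)) * f y) \<partial>lborel)"
    proof (rule integral_mono_AE[OF iphi Bochner_Integration.integrable_add[OF ig ih]])
      show "AE y in lborel. \<phi> y \<le> ln (norm y / norm (x - y)) * f y + indicator (ball x 1) y * (ln (norm (x - y)) * f y)"
        using AE_lborel_singleton[of 0] AE_lborel_singleton[of x]
      proof eventually_elim
        case (elim y)
        show ?case unfolding \<phi>_def by (rule pointwise[OF R0 nx elim(1) elim(2) sgn])
      qed
    qed
    have sumeq: "(\<integral>y. ln (norm y / norm (x - y)) * f y + indicator (ball x 1) y * (ln (norm (x - y)) * f y) \<partial>lborel)
       = (\<integral>y. ln (norm y / norm (x - y)) * f y \<partial>lborel) + (\<integral>y\<in>ball x 1. ln (norm (x - y)) * f y \<partial>lborel)"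
      unfolding Bdef using ig ih by (rule Bochner_Integration.integral_add)
    define P where "P = ln (norm x + R0)"
    define Qx where "Qx = ln (1 + norm x)"
    have P1: "l \<le> P" unfolding P_def l_def using nx1 R0 by (subst ln_le_cancel_iff) auto
    have P2: "P \<le> l + ln 2"
    proof -
      have "P \<le> ln (2 * norm x)" unfolding P_def using nx R0 by (subst ln_le_cancel_iff) auto
      also have "\<dots> = ln 2 + l" unfolding l_def using nx1 by (intro ln_mult_pos) auto
      finally show ?thesis by simp
    qed
    have Q1: "0 \<le> Qx" unfolding Qx_def by simp
    have Q2: "Qx \<le> l + ln 2"
    proof -
      have "Qx \<le> ln (2 * norm x)" unfolding Qx_def using nx1 by (subst ln_le_cancel_iff) auto
      also have "\<dots> = ln 2 + l" unfolding l_def using nx1 by (intro ln_mult_pos) auto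
      finally show ?thesis by simp
    qed
    have e1: "(P - l) * Iin \<le> ln 2 * \<bar>Iin\<bar>"
    proof -
      have "(P - l) * Iin \<le> (P - l) * \<bar>Iin\<bar>" using P1 by (intro mult_left_mono) auto
      also have "\<dots> \<le> ln 2 * \<bar>Iin\<bar>" using P2 by (intro mult_right_mono) auto
      finally show ?thesis .
    qed
    have e2: "l * Iout \<ge> - (l * \<epsilon>)"
    proof -
      have "- Iout \<le> \<epsilon>" using Iout_b by linarith
      hence "l * (- Iout) \<le> l * \<epsilon>" using l0 by (intro mult_left_mono) auto
      then show ?thesis by simp
    qed
    have e3: "Qx * Iout \<ge> - ((l + ln 2) * \<epsilon>)"
    proof -
      have "- Iout \<le> \<epsilon>" using Iout_b by linarith
      hence "Qx * (- Iout) \<le> Qx * \<epsilon>" using Q1 by (intro mult_left_mono) auto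
      moreover have "Qx * \<epsilon> \<le> (l + ln 2) * \<epsilon>" using Q2 eps by (intro mult_right_mono) auto
      ultimately show ?thesis by simp
    qed
    have fin: "- (\<Lambda> + 5 * \<epsilon>) * l \<le> J - P * Iin - ln 3 * A + Qx * Iout"
      by (rule arith_final[OF split e1 e2 e3 K_def lK'])
    have c1: "- (\<Lambda> + 5 * \<epsilon>) * l \<le> (\<integral>y. \<phi> y \<partial>lborel)"
      using fin unfolding intphi P_def Qx_def .
    have c2: "- (\<Lambda> + 5 * \<epsilon>) * l \<le> (\<integral>y. ln (norm y / norm (x - y)) * f y \<partial>lborel)
       + (\<integral>y\<in>ball x 1. ln (norm (x - y)) * f y \<partial>lborel)"
      using order_trans[OF c1 mono] unfolding sumeq .
    then show "(\<integral>y. ln (norm y / norm (x - y)) * f y \<partial>lborel)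
       + (\<integral>y\<in>ball x 1. ln (norm (x - y)) * f y \<partial>lborel)
     \<ge> - ((\<integral>y. f y \<partial>lborel) + 5 * \<epsilon>) * ln (norm x)"
      unfolding l_def \<Lambda>_def .
  qed
qed


theorem lemma3p2:
  fixes u :: "real^4 \<Rightarrow> real" and p :: real
    and \<Lambda> :: real and v :: "real^4 \<Rightarrow> real"
  assumes p_pos: "p > 0"
    and u_C4: "Ck 4 u"
    and pde: "\<forall>x. bilaplacian u x = (1 - norm x powr p) * exp (4 * u x)"
    and L1: "integrable lborel (\<lambda>y. (1 - norm y powr p) * exp (4 * u y))"
    and Lambda_def: "\<Lambda> = (\<integral>y. (1 - norm y powr p) * exp (4 * u y) \<partial>lborel)"
    and v_def: "\<forall>x. v x = 1 / (8 * pi\<^sup>2) *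
        (\<integral>y. ln (norm y / norm (x - y)) * ((1 - norm y powr p) * exp (4 * u y)) \<partial>lborel)"
  shows "\<forall>\<epsilon>>0. \<exists>R>0. \<forall>x. norm x \<ge> R \<longrightarrow>
     v x \<ge> - 1 / (8 * pi\<^sup>2) * (\<Lambda> + 5 * \<epsilon>) * ln (norm x)
           - 1 / (8 * pi\<^sup>2) *
             (\<integral>y\<in>ball x 1. ln (norm (x - y)) * ((1 - norm y powr p) * exp (4 * u y)) \<partial>lborel)"
proof (intro allI impI)
  fix \<epsilon> :: real
  assume eps: "\<epsilon> > 0"
  define f where "f y = (1 - norm y powr p) * exp (4 * u y)" for y :: "real^4"
  have cont: "continuous_on UNIV u" using u_C4 by (simp add: eval_nat_numeral)
  have bnd: "\<exists>M. \<forall>y\<in>cball c r. \<bar>f y\<bar> \<le> M" for c :: "real^4" and r :: real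
  proof -
    have "bounded (u ` cball c r)"
      by (intro compact_imp_bounded compact_continuous_image continuous_on_subset[OF cont]) auto
    then obtain B where B0: "\<forall>y\<in>cball c r. \<bar>u y\<bar> \<le> B"
      unfolding bounded_iff by (auto simp del: mem_cball)
    hence B: "\<And>y. y \<in> cball c r \<Longrightarrow> \<bar>u y\<bar> \<le> B" by blast
    have "\<bar>f y\<bar> \<le> (1 + (norm c + r) powr p) * exp (4 * B)" if y: "y \<in> cball c r" for y
    proof -
      have ny: "norm y \<le> norm c + r" using y norm_triangle_ineq2[of y c] by (auto simp: dist_norm norm_minus_commute)
      have "norm y powr p \<le> (norm c + r) powr p" using ny p_pos by (intro powr_mono2) auto
      moreover have "norm y powr p \<ge> 0" by simp
      ultimately have a: "\<bar>1 - norm y powr p\<bar> \<le> 1 + (norm c + r) powr p" by linarith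
      have b: "exp (4 * u y) \<le> exp (4 * B)" using B[OF y] by simp
      have "\<bar>f y\<bar> = \<bar>1 - norm y powr p\<bar> * exp (4 * u y)" by (simp add: f_def abs_mult)
      also have "\<dots> \<le> (1 + (norm c + r) powr p) * exp (4 * B)"
        using a b by (intro mult_mono) auto
      finally show ?thesis .
    qed
    then show ?thesis by blast
  qed
  have sgn: "f y \<le> 0" if "norm y \<ge> 1" for y :: "real^4"
  proof -
    have "norm y powr p \<ge> 1" using that p_pos by (intro ge_one_powr_ge_zero) auto
    then show ?thesis unfolding f_def by (intro mult_nonpos_nonneg) auto
  qed
  have fi: "integrable lborel f" using L1 unfolding f_def .
  obtain R where R: "R > 0" and HR: "\<And>x. norm x \<ge> R \<Longrightarrow>
     (\<integral>y. ln (norm y / norm (x - y)) * f y \<partial>lborel)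
       + (\<integral>y\<in>ball x 1. ln (norm (x - y)) * f y \<partial>lborel)
     \<ge> - ((\<integral>y. f y \<partial>lborel) + 5 * \<epsilon>) * ln (norm x)"
    using main_bound[OF fi bnd sgn eps] by blast
  show "\<exists>R>0. \<forall>x. norm x \<ge> R \<longrightarrow>
     v x \<ge> - 1 / (8 * pi\<^sup>2) * (\<Lambda> + 5 * \<epsilon>) * ln (norm x)
           - 1 / (8 * pi\<^sup>2) *
             (\<integral>y\<in>ball x 1. ln (norm (x - y)) * ((1 - norm y powr p) * exp (4 * u y)) \<partial>lborel)"
  proof (intro exI[of _ R] conjI allI impI R)
    fix x :: "real^4"
    assume xR: "norm x \<ge> R"
    define I where "I = (\<integral>y. ln (norm y / norm (x - y)) * f y \<partial>lborel)"
    define B where "B = (\<integral>y\<in>ball x 1. ln (norm (x - y)) * f y \<partial>lborel)"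
    define c where "c = 1 / (8 * pi\<^sup>2)"
    have c0: "c > 0" unfolding c_def by simp
    have Lf: "\<Lambda> = (\<integral>y. f y \<partial>lborel)" unfolding Lambda_def f_def ..
    have h: "- (\<Lambda> + 5 * \<epsilon>) * ln (norm x) \<le> I + B"
      using HR[OF xR] unfolding I_def B_def Lf .
    have "c * (- (\<Lambda> + 5 * \<epsilon>) * ln (norm x)) \<le> c * (I + B)"
      using h c0 by (intro mult_left_mono) auto
    hence "v x \<ge> - c * (\<Lambda> + 5 * \<epsilon>) * ln (norm x) - c * B"
      using v_def unfolding I_def f_def c_def[symmetric] by (simp add: algebra_simps)
    then show "v x \<ge> - 1 / (8 * pi\<^sup>2) * (\<Lambda> + 5 * \<epsilon>) * ln (norm x)
           - 1 / (8 * pi\<^sup>2) *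
             (\<integral>y\<in>ball x 1. ln (norm (x - y)) * ((1 - norm y powr p) * exp (4 * u y)) \<partial>lborel)"
      unfolding B_def f_def c_def by (simp add: algebra_simps)
  qed
qed

end
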